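(* Let $U\le B$ be positive integers, $P>0$, $\mathbf{H}\in\mathbb{C}^{U\times B}$, and $\mathbf{s}\in\mathbb{C}^U$ with $\mathbf{s}\neq\mathbf{0}$. Set $$\mathbf{Q}=\mathbf{I}_U-\frac{\mathbf{s}\mathbf{s}^H}{\|\mathbf{s}\|_2^2},\qquad \mathbf{A}=\mathbf{Q}\mathbf{H}\in\mathbb{C}^{U\times B},$$ and let $\ell=\sqrt{P/(2B)}$ and $$\mathcal{B}^B=\{\mathbf{c}\in\mathbb{C}^B:\ |\mathrm{Re}\{c_b\}|\le \ell,\ |\mathrm{Im}\{c_b\}|\le \ell,\ b=1,\dots,B\}.$$ Fix parameters $0<\delta<\gamma$. Consider the problem (BCR$^*$) $$\min_{\mathbf{x}\in\mathcal{B}^B,\ \mathbf{z}\in\mathbb{C}^B}\ E(\mathbf{z},\mathbf{x}),\qquad E(\mathbf{z},\mathbf{x})=\|\mathbf{A}\mathbf{z}\|_2^2+\gamma\|\mathbf{z}-\mathbf{x}\|_2^2-\delta\|\mathbf{x}\|_2^2 .$$ Define the sequence (algorithm C1PO) by $\mathbf{x}^{(1)}=\mathbf{H}^H\mathbf{s}$ and, for $t=1,2,\dots$, $$\mathbf{z}^{(t+1)}=(\mathbf{I}_B+\gamma^{-1}\mathbf{A}^H\mathbf{A})^{-1}\mathbf{x}^{(t)},\qquad \mathbf{x}^{(t+1)}=\mathrm{proj}(\mathbf{z}^{(t+1)}),$$ where $\mathrm{proj}$ acts entrywise as $$\mathrm{proj}(z)=\mathrm{sgn}(\mathrm{Re}\{z\})\min\Big\{\tfrac{\gamma}{\gamma-\delta}|\mathrm{Re}\{z\}|,\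 \ell\Big\}+j\,\mathrm{sgn}(\mathrm{Im}\{z\})\min\Big\{\tfrac{\gamma}{\gamma-\delta}|\mathrm{Im}\{z\}|,\ \ell\Big\}.$$ Then any limit point of the sequence $\{(\mathbf{x}^{(t)},\mathbf{z}^{(t)})\}$ is a stationary point of (BCR$^*$).
   Context: $\mathrm{sgn}(a)=+1$ for $a\ge 0$ and $-1$ for $a<0$; $j$ is the imaginary unit. Complex vectors are identified with real vectors of twice the dimension (real and imaginary parts), with real inner product $\mathrm{Re}\{\mathbf{u}^H\mathbf{v}\}$. A stationary point of (BCR$^*$) is a pair $(\mathbf{z}^\star,\mathbf{x}^\star)$ with $\mathbf{x}^\star\in\mathcal{B}^B$ satisfying the first-order optimality conditions: the gradient of $E$ with respect to $\mathbf{z}$ vanishes at $(\mathbf{z}^\star,\mathbf{x}^\star)$, and the negative gradient of $E$ with respect to $\mathbf{x}$ at $(\mathbf{z}^\star,\mathbf{x}^\star)$ lies in the normal cone of the convex set $\mathcal{B}^B$ at $\mathbf{x}^\star$. *)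

theory Defs
  imports "HOL-Analysis.Analysis"
begin

definition cadj :: "complex^'n^'m \<Rightarrow> complex^'m^'n" where
  "cadj A = (\<chi> i j. cnj (A $ j $ i))"

text \<open>Sign with the paper's convention sgn(a) = +1 for a >= 0.\<close>
definition psgn :: "real \<Rightarrow> real" where
  "psgn a = (if a \<ge> 0 then 1 else -1)"

definition projc :: "real \<Rightarrow> real \<Rightarrow> real \<Rightarrow> complex \<Rightarrow> complex" where
  "projc \<gamma> \<delta> l z =
     Complex (psgn (Re z) * min (\<gamma> / (\<gamma> - \<delta>) * \<bar>Re z\<bar>) l)
             (psgn (Im z) * min (\<gamma> / (\<gamma> - \<delta>) * \<bar>Im z\<bar>) l)"

definition projv :: "real \<Rightarrow> real \<Rightarrow> real \<Rightarrow> complex^'b \<Rightarrow> complex^'b" where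
  "projv \<gamma> \<delta> l z = (\<chi> b. projc \<gamma> \<delta> l (z $ b))"

definition box_set :: "real \<Rightarrow> (complex^'b) set" where
  "box_set l = {c. \<forall>b. \<bar>Re (c $ b)\<bar> \<le> l \<and> \<bar>Im (c $ b)\<bar> \<le> l}"

text \<open>Normal cone of a convex set C at x (w.r.t. the real inner product Re(u^H v),
  which is the inner product on complex^'b in HOL-Analysis).\<close>
definition normal_cone :: "('a::real_inner) set \<Rightarrow> 'a \<Rightarrow> 'a set" where
  "normal_cone C x = {v. \<forall>y\<in>C. inner v (y - x) \<le> 0}"

definition has_gradient :: "('a::real_inner \<Rightarrow> real) \<Rightarrow> 'a \<Rightarrow> 'a \<Rightarrow> bool" where
  "has_gradient f g p \<longleftrightarrow> (f has_derivative (\<lambda>h. inner g h)) (at p)"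

definition stationary_point ::
  "('a::real_inner \<Rightarrow> 'a \<Rightarrow> real) \<Rightarrow> 'a set \<Rightarrow> 'a \<Rightarrow> 'a \<Rightarrow> bool" where
  "stationary_point E C zs xs \<longleftrightarrow> xs \<in> C \<and>
     has_gradient (\<lambda>z. E z xs) 0 zs \<and>
     (\<exists>g. has_gradient (\<lambda>x. E zs x) g xs \<and> - g \<in> normal_cone C xs)"

definition limit_point :: "(nat \<Rightarrow> 'a::topological_space) \<Rightarrow> 'a \<Rightarrow> bool" where
  "limit_point f p \<longleftrightarrow> (\<exists>r. strict_mono r \<and> (f \<circ> r) \<longlonglongrightarrow> p)"

end

theory Submission
  imports Defs
begin


lemma mv_scaleR: fixes M :: "complex^'n::finite^'m::finite"
  shows "((c::real) *\<^sub>R M) *v v = c *\<^sub>R (M *v v)"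
  by (simp add: vec_eq_iff matrix_vector_mult_def scaleR_sum_right)

lemma inner_cnj: "inner (cnj a * w) (v::complex) = inner w (a * v)"
  by (simp add: inner_complex_def algebra_simps)

lemma adj_inner: fixes A :: "complex^'b::finite^'u::finite"
  shows "inner (cadj A *v w) v = inner w (A *v v)"
proof -
  have "inner (cadj A *v w) v = (\<Sum>b\<in>UNIV. \<Sum>u\<in>UNIV. inner (cnj (A$u$b) * w$u) (v$b))"
    by (simp add: inner_vec_def matrix_vector_mult_def cadj_def inner_sum_left)
  also have "\<dots> = (\<Sum>b\<in>UNIV. \<Sum>u\<in>UNIV. inner (w$u) (A$u$b * v$b))"
    by (simp add: inner_cnj)
  also have "\<dots> = (\<Sum>u\<in>UNIV. \<Sum>b\<in>UNIV. inner (w$u) (A$u$b * v$b))"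
    by (rule sum.swap)
  also have "\<dots> = inner w (A *v v)"
    by (simp add: inner_vec_def matrix_vector_mult_def inner_sum_right)
  finally show ?thesis .
qed

lemma N_inv: fixes A :: "complex^'b::finite^'u::finite"
  assumes "\<gamma> > 0"
  shows "invertible (mat 1 + inverse \<gamma> *\<^sub>R (cadj A ** A))"
proof -
  let ?N = "mat 1 + inverse \<gamma> *\<^sub>R (cadj A ** A)"
  have "\<forall>v. ?N *v v = 0 \<longrightarrow> v = 0"
  proof (intro allI impI)
    fix v assume h: "?N *v v = 0"
    have e: "?N *v v = v + inverse \<gamma> *\<^sub>R (cadj A *v (A *v v))"
      by (simp add: matrix_vector_mult_add_rdistrib mv_scaleR matrix_vector_mul_assoc)
    have "0 = inner (?N *v v) v" using h by simp
    also have "\<dots> = inner v v + inverse \<gamma> * inner (A *v v) (A *v v)"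
      unfolding e by (simp add: inner_add_left adj_inner)
    finally have "inner v v + inverse \<gamma> * inner (A *v v) (A *v v) = 0" by simp
    moreover have "inner v v \<ge> 0" by simp
    moreover have "inverse \<gamma> * inner (A *v v) (A *v v) \<ge> 0" using assms by simp
    ultimately have "inner v v = 0" by linarith
    then show "v = 0" by simp
  qed
  then show ?thesis
    by (simp add: invertible_left_inverse matrix_left_invertible_ker)
qed

lemma inv_right: "invertible N \<Longrightarrow> N ** matrix_inv N = mat 1"
  unfolding invertible_def matrix_inv_def by (rule someI_ex[THEN conjunct1])



lemma clip_nc:
  fixes a q l \<gamma> \<delta> :: real
  assumes "0 < \<delta>" "\<delta> < \<gamma>" "0 \<le> l" "\<bar>q\<bar> \<le> l"
  shows "(\<gamma> * a - (\<gamma> - \<delta>) * (psgn a * min (\<gamma> / (\<gamma> - \<delta>) * \<bar>a\<bar>) l)) *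
         (q - psgn a * min (\<gamma> / (\<gamma> - \<delta>) * \<bar>a\<bar>) l) \<le> 0"
proof -
  have g: "\<gamma> - \<delta> > 0" using assms by simp
  have k: "(\<gamma> - \<delta>) * (\<gamma> / (\<gamma> - \<delta>) * \<bar>a\<bar>) = \<gamma> * \<bar>a\<bar>" using g by simp
  show ?thesis
  proof (cases "\<gamma> / (\<gamma> - \<delta>) * \<bar>a\<bar> \<le> l")
    case True
    then have "psgn a * min (\<gamma> / (\<gamma> - \<delta>) * \<bar>a\<bar>) l = \<gamma> / (\<gamma> - \<delta>) * a"
      by (auto simp: psgn_def)
    then have "(\<gamma> - \<delta>) * (psgn a * min (\<gamma> / (\<gamma> - \<delta>) * \<bar>a\<bar>) l) = \<gamma> * a"
      using g by simp
    then show ?thesis by simp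
  next
    case False
    then have m: "min (\<gamma> / (\<gamma> - \<delta>) * \<bar>a\<bar>) l = l" by simp
    have "(\<gamma> - \<delta>) * l < \<gamma> * \<bar>a\<bar>" using False k g
      by (metis mult_strict_left_mono not_le)
    then show ?thesis using assms unfolding m
      by (cases "a \<ge> 0") (auto simp: psgn_def mult_le_0_iff)
  qed
qed

lemma psgn_min_abs: "0 \<le> l \<Longrightarrow> 0 \<le> c \<Longrightarrow> \<bar>psgn a * min (c * \<bar>a\<bar>) l\<bar> \<le> l"
  by (auto simp: psgn_def abs_mult)

lemma proj_in_box: "0 \<le> l \<Longrightarrow> 0 < \<delta> \<Longrightarrow> \<delta> < \<gamma> \<Longrightarrow> projv \<gamma> \<delta> l z \<in> box_set l"
  using psgn_min_abs[of l "\<gamma>/(\<gamma>-\<delta>)"]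
  unfolding box_set_def projv_def projc_def
  by auto

lemma proj_nc:
  assumes "0 < \<delta>" "\<delta> < \<gamma>" "0 \<le> l" "y \<in> box_set l"
  shows "inner (\<gamma> *\<^sub>R z - (\<gamma> - \<delta>) *\<^sub>R projv \<gamma> \<delta> l z) (y - projv \<gamma> \<delta> l z) \<le> 0"
proof -
  have "inner (\<gamma> *\<^sub>R z - (\<gamma> - \<delta>) *\<^sub>R projv \<gamma> \<delta> l z) (y - projv \<gamma> \<delta> l z) =
    (\<Sum>b\<in>UNIV. (\<gamma> * Re (z$b) - (\<gamma> - \<delta>) * (psgn (Re (z$b)) * min (\<gamma> / (\<gamma> - \<delta>) * \<bar>Re (z$b)\<bar>) l)) *
         (Re (y$b) - psgn (Re (z$b)) * min (\<gamma> / (\<gamma> - \<delta>) * \<bar>Re (z$b)\<bar>) l)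
       + (\<gamma> * Im (z$b) - (\<gamma> - \<delta>) * (psgn (Im (z$b)) * min (\<gamma> / (\<gamma> - \<delta>) * \<bar>Im (z$b)\<bar>) l)) *
         (Im (y$b) - psgn (Im (z$b)) * min (\<gamma> / (\<gamma> - \<delta>) * \<bar>Im (z$b)\<bar>) l))"
    by (simp add: inner_vec_def inner_complex_def projv_def projc_def)
  also have "\<dots> \<le> 0"
    using assms unfolding box_set_def
    by (intro sum_nonpos add_nonpos_nonpos clip_nc) auto
  finally show ?thesis .
qed

lemma adj_inner2: fixes A :: "complex^'b::finite^'u::finite"
  shows "inner v (cadj A *v w) = inner (A *v v) w"
  using adj_inner[of A w v] by (simp add: inner_commute)

lemma xid:
  fixes y p z :: "'a::real_inner"
  shows "\<gamma> * (norm (z - y))\<^sup>2 - \<delta> * (norm y)\<^sup>2 =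
    \<gamma> * (norm (z - p))\<^sup>2 - \<delta> * (norm p)\<^sup>2 - 2 * inner (\<gamma> *\<^sub>R z - (\<gamma> - \<delta>) *\<^sub>R p) (y - p)
    + (\<gamma> - \<delta>) * (norm (y - p))\<^sup>2"
  by (simp add: power2_norm_eq_inner inner_diff_left inner_diff_right inner_commute algebra_simps)

lemma zid:
  fixes A :: "complex^'b::finite^'u::finite"
  shows "(norm (A *v z))\<^sup>2 + \<gamma> * (norm (z - x))\<^sup>2 =
    (norm (A *v z'))\<^sup>2 + \<gamma> * (norm (z' - x))\<^sup>2
    + 2 * inner (cadj A *v (A *v z') + \<gamma> *\<^sub>R (z' - x)) (z - z')
    + (norm (A *v (z - z')))\<^sup>2 + \<gamma> * (norm (z - z'))\<^sup>2"
  by (simp add: power2_norm_eq_inner inner_diff_left inner_diff_right inner_add_left adj_inner adj_inner2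
      matrix_vector_mult_diff_distrib inner_commute algebra_simps)



lemma main:
  fixes A :: "complex^'b::finite^'u::finite" and x z :: "nat \<Rightarrow> complex^'b" and l \<gamma> \<delta> :: real
  assumes l: "0 \<le> l" and \<delta>: "0 < \<delta>" and \<delta>\<gamma>: "\<delta> < \<gamma>"
  and zrec: "\<And>t. z (Suc t) = matrix_inv (mat 1 + inverse \<gamma> *\<^sub>R (cadj A ** A)) *v x t"
  and xrec: "\<And>t. x (Suc t) = projv \<gamma> \<delta> l (z (Suc t))"
  shows "\<forall>xs zs. limit_point (\<lambda>t. (x t, z t)) (xs, zs) \<longrightarrow>
    stationary_point (\<lambda>zv xv. (norm (A *v zv))\<^sup>2 + \<gamma> * (norm (zv - xv))\<^sup>2 - \<delta> * (norm xv)\<^sup>2)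
      (box_set l) zs xs"
proof -
  define N where "N = mat 1 + inverse \<gamma> *\<^sub>R (cadj A ** A)"
  define E where "E = (\<lambda>zv xv. (norm (A *v zv))\<^sup>2 + \<gamma> * (norm (zv - xv))\<^sup>2 - \<delta> * (norm xv)\<^sup>2)"
  have \<gamma>: "\<gamma> > 0" using \<delta> \<delta>\<gamma> by simp
  have Nz: "N *v z (Suc t) = x t" for t
    using inv_right[OF N_inv[OF \<gamma>, of A]]
    by (simp add: zrec N_def matrix_vector_mul_assoc)
  have Nexp: "\<gamma> *\<^sub>R (N *v v) = \<gamma> *\<^sub>R v + cadj A *v (A *v v)" for v
    using \<gamma> by (simp add: N_def matrix_vector_mult_add_rdistrib mv_scaleR matrix_vector_mul_assoc scaleR_add_right)
  have key0: "N *v v = w \<Longrightarrow> cadj A *v (A *v v) + \<gamma> *\<^sub>R (v - w) = 0" for v w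
    using Nexp[of v] by (simp add: algebra_simps)
  have zopt: "E (z (Suc t)) (x t) \<le> E w (x t)" for t w
  proof -
    have "cadj A *v (A *v z (Suc t)) + \<gamma> *\<^sub>R (z (Suc t) - x t) = 0" using key0 Nz by blast
    then show ?thesis using zid[of A w \<gamma> "x t" "z (Suc t)"] \<gamma> unfolding E_def by simp
  qed
  have xbox: "x (Suc t) \<in> box_set l" for t using proj_in_box[OF l \<delta> \<delta>\<gamma>] xrec by simp
  have xopt: "E (z (Suc t)) (x (Suc t)) + (\<gamma> - \<delta>) * (norm (y - x (Suc t)))\<^sup>2 \<le> E (z (Suc t)) y"
    if "y \<in> box_set l" for t y
    using xid[of \<gamma> "z (Suc t)" y \<delta> "x (Suc t)"] proj_nc[OF \<delta> \<delta>\<gamma> l that, of "z (Suc t)"]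
    unfolding E_def xrec by simp
  define a where "a t = E (z (Suc t)) (x (Suc t))" for t
  have dec: "a (Suc t) + (\<gamma> - \<delta>) * (norm (x (Suc (Suc t)) - x (Suc t)))\<^sup>2 \<le> a t" for t
    using zopt[of "Suc t" "z (Suc t)"] xopt[OF xbox[of t], of "Suc t"]
    unfolding a_def by (simp add: norm_minus_commute)
  have nb: "(norm y)\<^sup>2 \<le> real CARD('b) * (2 * l\<^sup>2)" if "y \<in> box_set l" for y :: "complex^'b"
  proof -
    have "(norm y)\<^sup>2 = (\<Sum>b\<in>UNIV. (Re (y$b))\<^sup>2 + (Im (y$b))\<^sup>2)"
      unfolding power2_norm_eq_inner inner_vec_def inner_complex_def by (simp add: power2_eq_square)
    also have "\<dots> \<le> (\<Sum>b\<in>(UNIV::'b set). 2 * l\<^sup>2)"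
    proof (rule sum_mono)
      fix b
      have "\<bar>Re (y$b)\<bar> \<le> \<bar>l\<bar>" "\<bar>Im (y$b)\<bar> \<le> \<bar>l\<bar>" using that l unfolding box_set_def by auto
      then have "(Re (y$b))\<^sup>2 \<le> l\<^sup>2" "(Im (y$b))\<^sup>2 \<le> l\<^sup>2" by (simp_all add: abs_le_square_iff)
      then show "(Re (y$b))\<^sup>2 + (Im (y$b))\<^sup>2 \<le> 2 * l\<^sup>2" by simp
    qed
    finally show ?thesis by simp
  qed
  have lb: "- \<delta> * (real CARD('b) * (2 * l\<^sup>2)) \<le> a t" for t
  proof -
    have "\<delta> * (norm (x (Suc t)))\<^sup>2 \<le> \<delta> * (real CARD('b) * (2 * l\<^sup>2))"
      using nb[OF xbox[of t]] \<delta> by simp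
    moreover have "0 \<le> \<gamma> * (norm (z (Suc t) - x (Suc t)))\<^sup>2" using \<gamma> by simp
    moreover have "0 \<le> (norm (A *v z (Suc t)))\<^sup>2" by simp
    ultimately show ?thesis unfolding a_def E_def by linarith
  qed
  have "decseq a"
  proof (rule decseq_SucI)
    fix t show "a (Suc t) \<le> a t" using dec[of t] \<delta>\<gamma> by (smt (verit) mult_nonneg_nonneg zero_le_power2)
  qed
  then obtain L where aL: "a \<longlonglongrightarrow> L" using decseq_convergent lb by blast
  have ad: "(\<lambda>t. (a t - a (Suc t)) / (\<gamma> - \<delta>)) \<longlonglongrightarrow> 0"
    using tendsto_divide[OF tendsto_diff[OF aL LIMSEQ_Suc[OF aL]], of "\<lambda>_. \<gamma> - \<delta>" "\<gamma> - \<delta>"] \<delta>\<gamma>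
    by simp
  have dsq: "(\<lambda>t. (norm (x (Suc (Suc t)) - x (Suc t)))\<^sup>2) \<longlonglongrightarrow> 0"
  proof (rule tendsto_sandwich[OF _ _ tendsto_const ad])
    show "\<forall>\<^sub>F t in sequentially. 0 \<le> (norm (x (Suc (Suc t)) - x (Suc t)))\<^sup>2" by simp
    show "\<forall>\<^sub>F t in sequentially. (norm (x (Suc (Suc t)) - x (Suc t)))\<^sup>2 \<le> (a t - a (Suc t)) / (\<gamma> - \<delta>)"
    proof (rule always_eventually, rule allI)
      fix t
      have "(\<gamma> - \<delta>) * (norm (x (Suc (Suc t)) - x (Suc t)))\<^sup>2 \<le> a t - a (Suc t)"
        using dec[of t] by linarith
      then show "(norm (x (Suc (Suc t)) - x (Suc t)))\<^sup>2 \<le> (a t - a (Suc t)) / (\<gamma> - \<delta>)"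
        using \<delta>\<gamma> by (simp add: pos_le_divide_eq mult.commute)
    qed
  qed
  have "(\<lambda>t. norm (x (Suc (Suc t)) - x (Suc t))) \<longlonglongrightarrow> 0"
    using tendsto_real_sqrt[OF dsq] by simp
  then have "(\<lambda>t. x (Suc (Suc t)) - x (Suc t)) \<longlonglongrightarrow> 0"
    using tendsto_norm_zero_iff by blast
  then have dlim: "(\<lambda>t. x (Suc t) - x t) \<longlonglongrightarrow> 0"
    using LIMSEQ_imp_Suc[of "\<lambda>t. x (Suc t) - x t"] by simp
  show ?thesis
  proof (intro allI impI)
    fix xs zs assume "limit_point (\<lambda>t. (x t, z t)) (xs, zs)"
    then obtain r where r: "strict_mono r" and rl: "(\<lambda>k. (x (r k), z (r k))) \<longlonglongrightarrow> (xs, zs)"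
      unfolding limit_point_def o_def by blast
    have xr: "(\<lambda>k. x (r k)) \<longlonglongrightarrow> xs" using tendsto_fst[OF rl] by simp
    have zr: "(\<lambda>k. z (r k)) \<longlonglongrightarrow> zs" using tendsto_snd[OF rl] by simp
    define s where "s k = r (Suc k) - 1" for k
    have rs: "r (Suc k) = Suc (s k)" for k
      using seq_suble[OF r, of "Suc k"] unfolding s_def by simp
    have "strict_mono s"
      unfolding strict_mono_Suc_iff
    proof
      fix k show "s k < s (Suc k)" using r rs[of k] rs[of "Suc k"]
        by (metis Suc_less_eq lessI strict_mono_def)
    qed
    have x1: "(\<lambda>k. x (Suc (s k))) \<longlonglongrightarrow> xs" using LIMSEQ_Suc[OF xr] by (simp add: rs)
    have z1: "(\<lambda>k. z (Suc (s k))) \<longlonglongrightarrow> zs" using LIMSEQ_Suc[OF zr] by (simp add: rs)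
    have "(\<lambda>k. x (Suc (s k)) - x (s k)) \<longlonglongrightarrow> 0"
      using LIMSEQ_subseq_LIMSEQ[OF dlim \<open>strict_mono s\<close>] by (simp add: o_def)
    then have x0: "(\<lambda>k. x (s k)) \<longlonglongrightarrow> xs"
      using tendsto_diff[OF x1] by fastforce
    have "(\<lambda>k. N *v z (Suc (s k))) \<longlonglongrightarrow> N *v zs"
      by (rule bounded_linear.tendsto[OF matrix_vector_mul_bounded_linear z1])
    then have NL: "N *v zs = xs" using x0 LIMSEQ_unique by (simp add: Nz)
    have inbox: "xs \<in> box_set l"
      unfolding box_set_def
    proof (intro CollectI allI conjI)
      fix b
      show "\<bar>Re (xs $ b)\<bar> \<le> l"
        by (rule LIMSEQ_le_const2[OF tendsto_rabs[OF tendsto_Re[OF tendsto_vec_nth[OF x1]]]])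
           (use xbox in \<open>auto simp: box_set_def\<close>)
      show "\<bar>Im (xs $ b)\<bar> \<le> l"
        by (rule LIMSEQ_le_const2[OF tendsto_rabs[OF tendsto_Im[OF tendsto_vec_nth[OF x1]]]])
           (use xbox in \<open>auto simp: box_set_def\<close>)
    qed
    have nc: "inner (\<gamma> *\<^sub>R zs - (\<gamma> - \<delta>) *\<^sub>R xs) (y - xs) \<le> 0" if y: "y \<in> box_set l" for y
    proof (rule LIMSEQ_le_const2)
      show "(\<lambda>k. inner (\<gamma> *\<^sub>R z (Suc (s k)) - (\<gamma> - \<delta>) *\<^sub>R x (Suc (s k))) (y - x (Suc (s k))))
        \<longlonglongrightarrow> inner (\<gamma> *\<^sub>R zs - (\<gamma> - \<delta>) *\<^sub>R xs) (y - xs)"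
        by (intro tendsto_intros x1 z1)
      show "\<exists>N. \<forall>n\<ge>N. inner (\<gamma> *\<^sub>R z (Suc (s n)) - (\<gamma> - \<delta>) *\<^sub>R x (Suc (s n))) (y - x (Suc (s n))) \<le> 0"
        using proj_nc[OF \<delta> \<delta>\<gamma> l y] by (simp add: xrec)
    qed
    have dA: "((\<lambda>v. A *v v) has_derivative (\<lambda>h. A *v h)) (at p)" for p
      by (rule bounded_linear_imp_has_derivative) simp
    have k0: "cadj A *v (A *v zs) + \<gamma> *\<^sub>R (zs - xs) = 0" using key0 NL by blast
    have g1: "has_gradient (\<lambda>zv. E zv xs) 0 zs"
    proof -
      have f: "(\<lambda>zv. E zv xs) = (\<lambda>zv. inner (A *v zv) (A *v zv) + \<gamma> * inner (zv - xs) (zv - xs) - \<delta> * inner xs xs)"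
        by (simp add: E_def power2_norm_eq_inner)
      have "((\<lambda>zv. inner (A *v zv) (A *v zv) + \<gamma> * inner (zv - xs) (zv - xs) - \<delta> * inner xs xs) has_derivative
         (\<lambda>h. inner (A *v zs) (A *v h) + inner (A *v h) (A *v zs) + \<gamma> * (inner (zs - xs) (h - 0) + inner (h - 0) (zs - xs)) - \<delta> * 0)) (at zs)"
        by (intro derivative_intros dA)
      moreover have "(\<lambda>h. inner (A *v zs) (A *v h) + inner (A *v h) (A *v zs) + \<gamma> * (inner (zs - xs) (h - 0) + inner (h - 0) (zs - xs)) - \<delta> * 0)
          = (\<lambda>h. 2 * inner (cadj A *v (A *v zs) + \<gamma> *\<^sub>R (zs - xs)) h)"
        by (rule ext) (simp add: inner_add_left adj_inner adj_inner2 inner_commute algebra_simps)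
      moreover have "(inner (0::complex^'b)) = (\<lambda>h. 0)" by (simp add: fun_eq_iff)
      ultimately show ?thesis unfolding has_gradient_def f k0 by simp
    qed
    define g where "g = 2 *\<^sub>R (\<gamma> *\<^sub>R (xs - zs) - \<delta> *\<^sub>R xs)"
    have g2: "has_gradient (\<lambda>xv. E zs xv) g xs"
    proof -
      have f: "(\<lambda>xv. E zs xv) = (\<lambda>xv. inner (A *v zs) (A *v zs) + \<gamma> * inner (zs - xv) (zs - xv) - \<delta> * inner xv xv)"
        by (simp add: E_def power2_norm_eq_inner)
      have "((\<lambda>xv. inner (A *v zs) (A *v zs) + \<gamma> * inner (zs - xv) (zs - xv) - \<delta> * inner xv xv) has_derivative
         (\<lambda>h. 0 + \<gamma> * (inner (zs - xs) (0 - h) + inner (0 - h) (zs - xs)) - \<delta> * (inner xs h + inner h xs))) (at xs)"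
        by (intro derivative_intros)
      moreover have "(\<lambda>h. 0 + \<gamma> * (inner (zs - xs) (0 - h) + inner (0 - h) (zs - xs)) - \<delta> * (inner xs h + inner h xs))
          = (\<lambda>h. inner g h)"
        by (rule ext) (simp add: g_def inner_diff_left inner_diff_right inner_commute algebra_simps)
      ultimately show ?thesis unfolding has_gradient_def f by simp
    qed
    have "- g \<in> normal_cone (box_set l) xs"
      unfolding normal_cone_def
    proof (intro CollectI ballI)
      fix y :: "complex^'b" assume "y \<in> box_set l"
      have "- g = 2 *\<^sub>R (\<gamma> *\<^sub>R zs - (\<gamma> - \<delta>) *\<^sub>R xs)" by (simp add: g_def algebra_simps)
      then show "inner (- g) (y - xs) \<le> 0" using nc[OF \<open>y \<in> box_set l\<close>] by simp
    qed
    then show "stationary_point (\<lambda>zv xv. (norm (A *v zv))\<^sup>2 + \<gamma> * (norm (zv - xv))\<^sup>2 - \<delta> * (norm xv)\<^sup>2)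
      (box_set l) zs xs"
      unfolding stationary_point_def E_def[symmetric] using inbox g1 g2 by blast
  qed
qed


theorem theorem1:
  fixes H :: "complex^'b::finite^'u::finite"
    and s :: "complex^'u"
    and P \<gamma> \<delta> :: real
    and x z :: "nat \<Rightarrow> complex^'b"
  assumes UB: "CARD('u) \<le> CARD('b)"
    and P: "P > 0"
    and s: "s \<noteq> 0"
    and \<delta>: "0 < \<delta>" and \<delta>\<gamma>: "\<delta> < \<gamma>"
    and x0: "x 0 = cadj H *v s"
    and zrec: "\<And>t. z (Suc t) =
        matrix_inv (mat 1 + inverse \<gamma> *\<^sub>R
          (cadj ((mat 1 - (\<chi> i k. s $ i * cnj (s $ k) / complex_of_real ((norm s)\<^sup>2))) ** H)
           ** ((mat 1 - (\<chi> i k. s $ i * cnj (s $ k) / complex_of_real ((norm s)\<^sup>2))) ** H)))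
        *v x t"
    and xrec: "\<And>t. x (Suc t) = projv \<gamma> \<delta> (sqrt (P / (2 * real CARD('b)))) (z (Suc t))"
  shows "\<forall>xs zs. limit_point (\<lambda>t. (x t, z t)) (xs, zs) \<longrightarrow>
           stationary_point
             (\<lambda>zv xv. (norm (((mat 1 - (\<chi> i k. s $ i * cnj (s $ k) / complex_of_real ((norm s)\<^sup>2))) ** H) *v zv))\<^sup>2
                      + \<gamma> * (norm (zv - xv))\<^sup>2 - \<delta> * (norm xv)\<^sup>2)
             (box_set (sqrt (P / (2 * real CARD('b))))) zs xs"
    apply (rule main)
      using P apply simp
     apply (rule \<delta>)
    apply (rule \<delta>\<gamma>)
   apply (rule zrec)
  apply (rule xrec)
  done

end
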